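(* Let $T$ be a tree with exactly three pendant vertices $u_1,u_2,u_3$ and major vertex $m$, with $d(u_1,m)\equiv d(u_2,m)\equiv 1\pmod 3$. Then there exists an eigenvector $x$ of $L(T)$ with eigenvalue $1$ such that for every $k\in\{1,2,3\}$ and every vertex $v$ on the path $P_{u_k,m}$ with $d(v,u_k)\equiv 1\pmod 3$, one has $x(v)=0$.
   Context: $L(T)=D(T)-A(T)$ is the Laplacian matrix of $T$. A pendant vertex has degree $1$; a major vertex has degree at least $3$. $P_{r,s}$ is the path in $T$ from $r$ to $s$, and $d$ denotes distance. *)

theory Defs
  imports "HOL-Analysis.Analysis"
begin

definition simple_graph :: "'a set \<Rightarrow> ('a \<Rightarrow> 'a \<Rightarrow> bool) \<Rightarrow> bool" where
  "simple_graph V E \<longleftrightarrow> finite V \<and>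
     (\<forall>u v. E u v \<longrightarrow> u \<in> V \<and> v \<in> V) \<and>
     (\<forall>u v. E u v \<longrightarrow> E v u) \<and> (\<forall>v. \<not> E v v)"

definition walk :: "'a set \<Rightarrow> ('a \<Rightarrow> 'a \<Rightarrow> bool) \<Rightarrow> 'a list \<Rightarrow> bool" where
  "walk V E p \<longleftrightarrow> p \<noteq> [] \<and> set p \<subseteq> V \<and>
     (\<forall>i. Suc i < length p \<longrightarrow> E (p ! i) (p ! Suc i))"

definition gpath :: "'a set \<Rightarrow> ('a \<Rightarrow> 'a \<Rightarrow> bool) \<Rightarrow> 'a list \<Rightarrow> bool" where
  "gpath V E p \<longleftrightarrow> walk V E p \<and> distinct p"

definition gconnected :: "'a set \<Rightarrow> ('a \<Rightarrow> 'a \<Rightarrow> bool) \<Rightarrow> bool" where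
  "gconnected V E \<longleftrightarrow> (\<forall>u\<in>V. \<forall>v\<in>V. \<exists>p. walk V E p \<and> hd p = u \<and> last p = v)"

definition gcycle :: "'a set \<Rightarrow> ('a \<Rightarrow> 'a \<Rightarrow> bool) \<Rightarrow> 'a list \<Rightarrow> bool" where
  "gcycle V E p \<longleftrightarrow> gpath V E p \<and> length p \<ge> 3 \<and> E (last p) (hd p)"

definition tree :: "'a set \<Rightarrow> ('a \<Rightarrow> 'a \<Rightarrow> bool) \<Rightarrow> bool" where
  "tree V E \<longleftrightarrow> simple_graph V E \<and> V \<noteq> {} \<and> gconnected V E \<and> (\<nexists>p. gcycle V E p)"

definition degree :: "'a set \<Rightarrow> ('a \<Rightarrow> 'a \<Rightarrow> bool) \<Rightarrow> 'a \<Rightarrow> nat" where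
  "degree V E v = card {w \<in> V. E v w}"

definition pendant :: "'a set \<Rightarrow> ('a \<Rightarrow> 'a \<Rightarrow> bool) \<Rightarrow> 'a \<Rightarrow> bool" where
  "pendant V E v \<longleftrightarrow> v \<in> V \<and> degree V E v = 1"

definition major :: "'a set \<Rightarrow> ('a \<Rightarrow> 'a \<Rightarrow> bool) \<Rightarrow> 'a \<Rightarrow> bool" where
  "major V E v \<longleftrightarrow> v \<in> V \<and> degree V E v \<ge> 3"

definition gdist :: "'a set \<Rightarrow> ('a \<Rightarrow> 'a \<Rightarrow> bool) \<Rightarrow> 'a \<Rightarrow> 'a \<Rightarrow> nat" where
  "gdist V E u v = (LEAST n. \<exists>p. walk V E p \<and> hd p = u \<and> last p = v \<and> length p = Suc n)"

text \<open>Vertex set of the path P_{r,s} from r to s (unique in a tree).\<close>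
definition path_verts :: "'a set \<Rightarrow> ('a \<Rightarrow> 'a \<Rightarrow> bool) \<Rightarrow> 'a \<Rightarrow> 'a \<Rightarrow> 'a set" where
  "path_verts V E r s = \<Union> {set p | p. gpath V E p \<and> hd p = r \<and> last p = s}"

definition laplacian :: "'a set \<Rightarrow> ('a \<Rightarrow> 'a \<Rightarrow> bool) \<Rightarrow> ('a \<Rightarrow> real) \<Rightarrow> 'a \<Rightarrow> real" where
  "laplacian V E x v = real (degree V E v) * x v - (\<Sum>w\<in>{w \<in> V. E v w}. x w)"

definition lap_eigenvector :: "'a set \<Rightarrow> ('a \<Rightarrow> 'a \<Rightarrow> bool) \<Rightarrow> real \<Rightarrow> ('a \<Rightarrow> real) \<Rightarrow> bool" where
  "lap_eigenvector V E mu x \<longleftrightarrow> (\<exists>v\<in>V. x v \<noteq> 0) \<and> (\<forall>v\<in>V. laplacian V E x v = mu * x v)"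

end

theory Submission
  imports Defs
begin


lemma walk_Nil[simp]: "\<not> walk V E []" by (simp add: walk_def)

lemma walk_single[simp]: "walk V E [a] \<longleftrightarrow> a \<in> V" by (simp add: walk_def)

lemma walk_Cons2[simp]: "walk V E (a # b # p) \<longleftrightarrow> a \<in> V \<and> E a b \<and> walk V E (b # p)"
proof
  assume "walk V E (a # b # p)"
  then show "a \<in> V \<and> E a b \<and> walk V E (b # p)"
    unfolding walk_def by (auto dest: spec[where x="Suc _"] spec[where x=0])
next
  assume H: "a \<in> V \<and> E a b \<and> walk V E (b # p)"
  show "walk V E (a # b # p)" unfolding walk_def
  proof (intro conjI allI impI)
    fix i assume "Suc i < length (a # b # p)"
    then show "E ((a # b # p) ! i) ((a # b # p) ! Suc i)"
      using H unfolding walk_def by (cases i) auto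
  qed (use H in \<open>auto simp: walk_def\<close>)
qed

lemma walk_append:
  "xs \<noteq> [] \<Longrightarrow> ys \<noteq> [] \<Longrightarrow> walk V E (xs @ ys) \<longleftrightarrow> walk V E xs \<and> walk V E ys \<and> E (last xs) (hd ys)"
proof (induction xs)
  case Nil then show ?case by simp
next
  case (Cons a xs)
  show ?case
  proof (cases xs)
    case Nil
    then show ?thesis using Cons.prems by (cases ys) auto
  next
    case (Cons c xs')
    then show ?thesis using Cons.IH Cons.prems by auto
  qed
qed

lemma walk_rev: assumes "\<forall>u v. E u v \<longrightarrow> E v u" shows "walk V E p \<Longrightarrow> walk V E (rev p)"
proof (induction p rule: induct_list012)
  case (3 x y zs)
  then have "walk V E (rev zs @ [y]) " by simp
  moreover have "walk V E [x]" using 3 by simp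
  moreover have "E y x" using 3 assms by auto
  ultimately have "walk V E ((rev zs @ [y]) @ [x])" using walk_append[of "rev zs @ [y]" "[x]"] by simp
  then show ?case by simp
qed auto

lemma walk_take: "walk V E p \<Longrightarrow> 0 < n \<Longrightarrow> walk V E (take n p)"
  using walk_append[of "take n p" "drop n p" V E]
  by (cases "drop n p = []") (auto simp: walk_def)

lemma walk_drop: assumes "walk V E p" "n < length p" shows "walk V E (drop n p)"
proof (cases "n = 0")
  case False
  have "walk V E (take n p @ drop n p)" using assms by simp
  then show ?thesis using walk_append[of "take n p" "drop n p" V E] False assms
    by (metis Nil_is_append_conv append_take_drop_id drop_eq_Nil leD take_eq_Nil)
qed (use assms in simp)

lemma walk_join: assumes "walk V E p" "walk V E q" "last p = hd q" shows "walk V E (p @ tl q)"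
proof (cases "tl q = []")
  case True then show ?thesis using assms by simp
next
  case False
  then obtain b c r where q: "q = b # c # r" using assms(2) unfolding walk_def
    by (metis list.exhaust_sel)
  have "walk V E (tl q)" using walk_drop[OF assms(2), of 1] q by simp
  moreover have "E (last p) (hd (tl q))" using assms q by simp
  ultimately show ?thesis using walk_append[of p "tl q" V E] assms(1) False
    by (auto simp: walk_def)
qed


lemma last_take_nth_conv: "i < length w \<Longrightarrow> last (take (Suc i) w) = w ! i"
  by (metis last_snoc take_Suc_conv_app_nth)

lemma gdist_le: assumes "walk V E p" shows "gdist V E (hd p) (last p) < length p"
proof -
  have "length p = Suc (length p - 1)" using assms by (cases p) (auto simp: walk_def)
  then have "gdist V E (hd p) (last p) \<le> length p - 1" unfolding gdist_def
    using assms by (intro Least_le) blast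
  then show ?thesis using assms by (cases p) (auto simp: walk_def)
qed

lemma shortest_exists: assumes "walk V E p"
  shows "\<exists>q. walk V E q \<and> hd q = hd p \<and> last q = last p \<and> length q = Suc (gdist V E (hd p) (last p))"
proof -
  have "length p = Suc (length p - 1)" using assms by (cases p) (auto simp: walk_def)
  then have "\<exists>n q. walk V E q \<and> hd q = hd p \<and> last q = last p \<and> length q = Suc n"
    using assms by blast
  then show ?thesis unfolding gdist_def by (rule LeastI_ex)
qed

lemma shortcut: assumes "walk V E w" "\<not> distinct w"
  shows "\<exists>w'. walk V E w' \<and> hd w' = hd w \<and> last w' = last w \<and> length w' < length w"
proof -
  obtain i j where ij: "i < j" "j < length w" "w ! i = w ! j"
    using assms(2) by (metis distinct_conv_nth linorder_neqE_nat)
  let ?w = "take (Suc i) w @ tl (drop j w)"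
  have w1: "walk V E (take (Suc i) w)" using walk_take assms(1) by blast
  have w2: "walk V E (drop j w)" using walk_drop assms(1) ij by blast
  have l1: "last (take (Suc i) w) = w ! i" using ij by (simp add: last_take_nth_conv)  
  have h2: "hd (drop j w) = w ! j" using ij by (simp add: hd_drop_conv_nth)
  have "walk V E ?w" using walk_join[OF w1 w2] l1 h2 ij by simp
  moreover have "hd ?w = hd w" using ij by (cases w) auto
  moreover have "last ?w = last w"
  proof (cases "tl (drop j w) = []")
    case True
    then have "length (tl (drop j w)) = 0" by simp
    then have "j = length w - 1" using ij by simp
    moreover have "w \<noteq> []" using ij by auto
    ultimately show ?thesis using True l1 ij by (simp add: last_conv_nth)
  next
    case False
    then have "last (tl (drop j w)) = last (drop j w)" by (intro last_tl) simp
    then show ?thesis using False ij by simp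
  qed
  moreover have "length ?w < length w" using ij by simp
  ultimately show ?thesis by blast
qed

lemma shortest_distinct: assumes "walk V E q" "length q = Suc (gdist V E (hd q) (last q))"
  shows "distinct q"
proof (rule ccontr)
  assume "\<not> distinct q"
  then obtain w where "walk V E w" "hd w = hd q" "last w = last q" "length w < length q"
    using shortcut assms(1) by blast
  then show False using gdist_le[of V E w] assms(2) by simp
qed

lemma connected_path: assumes "gconnected V E" "a \<in> V" "b \<in> V"
  shows "\<exists>p. walk V E p \<and> distinct p \<and> hd p = a \<and> last p = b \<and> length p = Suc (gdist V E a b)"
proof -
  obtain p where "walk V E p" "hd p = a" "last p = b" using assms unfolding gconnected_def by blast
  then obtain q where "walk V E q" "hd q = a" "last q = b" "length q = Suc (gdist V E a b)"
    using shortest_exists by blast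
  then show ?thesis using shortest_distinct by metis
qed

lemma gdist_nth: assumes sym: "\<forall>u v. E u v \<longrightarrow> E v u" and P: "walk V E P"
  and len: "length P = Suc (gdist V E (hd P) (last P))" and j: "j < length P"
  shows "gdist V E (P ! j) (hd P) = j"
proof (rule antisym)
  let ?W = "rev (take (Suc j) P)"
  have "walk V E ?W" using walk_rev[OF sym] walk_take[OF P] by blast
  moreover have "hd ?W = P ! j" using j by (simp add: hd_rev last_take_nth_conv)
  moreover have "last ?W = hd P" using j P by (simp add: last_rev walk_def hd_take)
  ultimately show "gdist V E (P ! j) (hd P) \<le> j" using gdist_le[of V E ?W] j by simp
next
  have Wr: "walk V E (rev (take (Suc j) P))" using walk_rev[OF sym] walk_take[OF P] by blast
  have hW: "hd (rev (take (Suc j) P)) = P ! j" using j by (simp add: hd_rev last_take_nth_conv)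
  have lW: "last (rev (take (Suc j) P)) = hd P" using j P by (simp add: last_rev walk_def hd_take)
  obtain W where W: "walk V E W" "hd W = P ! j" "last W = hd P"
    "length W = Suc (gdist V E (P ! j) (hd P))"
    using shortest_exists[OF Wr] hW lW by metis
  let ?X = "rev W @ tl (drop j P)"
  have w2: "walk V E (drop j P)" using walk_drop P j by blast
  have "walk V E ?X" using walk_join[OF walk_rev[OF sym W(1)] w2] W j
    by (simp add: last_rev hd_drop_conv_nth)
  moreover have "hd ?X = hd P" using W(1,3) by (auto simp: walk_def hd_append hd_rev)
  moreover have "last ?X = last P"
  proof (cases "tl (drop j P) = []")
    case True
    then have "length (tl (drop j P)) = 0" by simp
    then have "j = length P - 1" using j by simp
    moreover have "P \<noteq> []" using j by auto
    ultimately show ?thesis using True W j by (simp add: last_conv_nth last_rev)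
  next
    case False
    then have "last (tl (drop j P)) = last (drop j P)" by (intro last_tl) simp
    then show ?thesis using False j by simp
  qed
  ultimately have "gdist V E (hd P) (last P) < length ?X" using gdist_le[of V E ?X] by simp
  then show "j \<le> gdist V E (P ! j) (hd P)" using len W j by simp
qed



lemma walk_mono: "walk V' E' q \<Longrightarrow> V' \<subseteq> V \<Longrightarrow> (\<forall>a b. E' a b \<longrightarrow> E a b) \<Longrightarrow> walk V E q"
  unfolding walk_def by blast

lemma gpath_len: "gpath V E q \<Longrightarrow> finite V \<Longrightarrow> length q \<le> card V"
  unfolding gpath_def walk_def by (metis card_mono distinct_card)

lemma leaf_exists: assumes T: "tree V E" and c: "card V \<ge> 2"
  shows "\<exists>l p. l \<in> V \<and> {w\<in>V. E l w} = {p}"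
proof -
  have sg: "finite V" "\<forall>u v. E u v \<longrightarrow> u \<in> V \<and> v \<in> V" "\<forall>u v. E u v \<longrightarrow> E v u" "\<forall>v. \<not> E v v"
    using T unfolding tree_def simple_graph_def by auto
  have con: "gconnected V E" and nc: "\<nexists>p. gcycle V E p" using T unfolding tree_def by auto
  have "V \<noteq> {}" using c by auto
  then obtain a where a: "a \<in> V" by blast
  have "card (V - {a}) \<ge> 1" using c a sg(1) by simp
  then have "V - {a} \<noteq> {}" by (metis card.empty not_one_le_zero)
  then obtain b where "b \<in> V - {a}" by blast
  then have ab: "a \<in> V" "b \<in> V" "a \<noteq> b" using a by auto
  obtain q where q: "walk V E q" "hd q = a" "last q = b" using con ab unfolding gconnected_def by blast
  have "length q \<ge> 2"
  proof (rule ccontr)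
    assume "\<not> 2 \<le> length q"
    then have "length q = 1" using q(1) unfolding walk_def by (cases q) (auto simp: Suc_le_eq)
    then show False using q ab by (cases q) auto
  qed
  then have e: "E (q!0) (q!1)" using q(1) unfolding walk_def by auto
  then have "gpath V E [q!0, q!1]" using sg unfolding gpath_def by auto
  define P where "P = (\<lambda>n. \<exists>q. gpath V E q \<and> length q = n)"
  have bnd: "\<And>y. P y \<Longrightarrow> y \<le> card V" using gpath_len sg(1) unfolding P_def by blast
  have P2: "P 2" using \<open>gpath V E [q!0, q!1]\<close> unfolding P_def by force
  define n where "n = (GREATEST n. P n)"
  have "P n" unfolding n_def by (rule GreatestI_nat[of P 2 "card V", OF P2 bnd])
  then obtain r where r: "gpath V E r" "length r = n" unfolding P_def by blast
  have n2: "n \<ge> 2" unfolding n_def by (rule Greatest_le_nat[of P 2 "card V", OF P2 bnd])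
  have rw: "walk V E r" and rd: "distinct r" using r unfolding gpath_def by auto
  let ?z = "r ! (n - 1)" and ?y = "r ! (n - 2)"
  have "r \<noteq> []" using r n2 by auto
  then have lz: "last r = ?z" using r by (simp add: last_conv_nth)
  have s1: "Suc (n-2) < length r" "Suc (n-2) = n-1" using r n2 by auto
  have "E ?y ?z" using rw s1 unfolding walk_def by metis
  then have ezy: "E ?z ?y" using sg by blast
  have "{w\<in>V. E ?z w} = {?y}"
  proof (intro equalityI subsetI)
    fix w assume w: "w \<in> {w\<in>V. E ?z w}"
    show "w \<in> {?y}"
    proof (cases "w \<in> set r")
      case False
      have "walk V E (r @ [w])" using walk_append[of r "[w]" V E] rw w lz r n2 \<open>r \<noteq> []\<close> by auto
      then have "gpath V E (r @ [w])" using rd False unfolding gpath_def by simp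
      then have "P (Suc n)" using r unfolding P_def by force
      then have "Suc n \<le> n" unfolding n_def by (rule Greatest_le_nat[of P _ "card V", OF _ bnd])
      then show ?thesis by simp
    next
      case True
      then obtain i where i: "i < n" "r ! i = w" using r by (metis in_set_conv_nth)
      consider "i = n - 1" | "i = n - 2" | "i < n - 2" using i by linarith
      then show ?thesis
      proof cases
        case 1 then show ?thesis using w i sg by auto
      next
        case 2 then show ?thesis using i by simp
      next
        case 3
        let ?c = "drop i r"
        have "walk V E ?c" using walk_drop rw i r by auto
        moreover have "distinct ?c" using rd by simp
        moreover have "length ?c \<ge> 3" using 3 r by simp
        moreover have "last ?c = ?z" using lz i r by simp
        moreover have "hd ?c = w" using i r by (simp add: hd_drop_conv_nth)
        ultimately have "gcycle V E ?c" using w unfolding gcycle_def gpath_def by auto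
        then show ?thesis using nc by blast
      qed
    qed
  next
    fix w assume "w \<in> {?y}"
    then show "w \<in> {w\<in>V. E ?z w}" using ezy sg by auto
  qed
  moreover have "?z \<in> V" using rw r n2 unfolding walk_def by auto
  ultimately show ?thesis by blast
qed

lemma tree_remove: assumes T: "tree V E" and l: "l \<in> V" "{w\<in>V. E l w} = {p}" and c: "card V \<ge> 2"
  shows "tree (V - {l}) (\<lambda>a b. E a b \<and> a \<noteq> l \<and> b \<noteq> l)"
proof -
  have sg: "finite V" "\<forall>u v. E u v \<longrightarrow> u \<in> V \<and> v \<in> V" "\<forall>u v. E u v \<longrightarrow> E v u" "\<forall>v. \<not> E v v"
    using T unfolding tree_def simple_graph_def by auto
  have con: "gconnected V E" and nc: "\<nexists>p. gcycle V E p" using T unfolding tree_def by auto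
  let ?V = "V - {l}" and ?E = "\<lambda>a b. E a b \<and> a \<noteq> l \<and> b \<noteq> l"
  have "simple_graph ?V ?E" using sg unfolding simple_graph_def by auto
  moreover have "?V \<noteq> {}"
  proof -
    have "card ?V \<ge> 1" using c l sg(1) by simp
    then show ?thesis by (metis card.empty not_one_le_zero)
  qed
  moreover have "\<nexists>q. gcycle ?V ?E q"
  proof
    assume "\<exists>q. gcycle ?V ?E q"
    then obtain q where "gcycle ?V ?E q" by blast
    then have "gcycle V E q" unfolding gcycle_def gpath_def using walk_mono[of ?V ?E q V E] by auto
    then show False using nc by blast
  qed
  moreover have "gconnected ?V ?E" unfolding gconnected_def
  proof (intro ballI)
    fix a b assume ab: "a \<in> ?V" "b \<in> ?V"
    obtain q where q: "walk V E q" "distinct q" "hd q = a" "last q = b"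
      using connected_path[OF con, of a b] ab by auto
    have "l \<notin> set q"
    proof
      assume "l \<in> set q"
      then obtain i where i: "i < length q" "q ! i = l" by (metis in_set_conv_nth)
      have "i \<noteq> 0"
      proof
        assume "i = 0"
        then have "hd q = l" using i by (simp add: hd_conv_nth)
        then show False using q ab by auto
      qed
      moreover have "i \<noteq> length q - 1"
      proof
        assume "i = length q - 1"
        moreover have "q \<noteq> []" using i by auto
        ultimately have "last q = l" using i by (simp add: last_conv_nth)
        then show False using q ab by auto
      qed
      ultimately have s2: "Suc (i - 1) < length q" "Suc (i-1) = i" "Suc i < length q" using i by auto
      have e: "E (q ! (i - 1)) l" "E l (q ! Suc i)" using q(1) s2 i unfolding walk_def by metis+
      then have "q ! (i - 1) \<in> {w\<in>V. E l w}" "q ! Suc i \<in> {w\<in>V. E l w}" using sg by auto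
      then have "q ! (i - 1) = q ! Suc i" using l by auto
      moreover have "Suc i < length q" using i \<open>i \<noteq> length q - 1\<close> by auto
      ultimately show False using q(2) i by (simp add: nth_eq_iff_index_eq)
    qed
    then have "walk ?V ?E q" using q(1) unfolding walk_def by (auto simp: nth_mem)
    then show "\<exists>p. walk ?V ?E p \<and> hd p = a \<and> last p = b" using q by blast
  qed
  ultimately show ?thesis unfolding tree_def by blast
qed

lemma deg_sum_aux: "\<forall>V E. card V = n \<longrightarrow> tree V E \<longrightarrow> (\<Sum>v\<in>V. degree V E v) = 2 * card V - 2"
proof (induction n)
  case 0
  then show ?case unfolding tree_def simple_graph_def by auto
next
  case (Suc n)
  show ?case
  proof (intro allI impI)
    fix V :: "'a set" and E assume cV: "card V = Suc n" and T: "tree V E"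
    have sg: "finite V" "\<forall>u v. E u v \<longrightarrow> u \<in> V \<and> v \<in> V" "\<forall>u v. E u v \<longrightarrow> E v u" "\<forall>v. \<not> E v v"
      using T unfolding tree_def simple_graph_def by auto
    show "(\<Sum>v\<in>V. degree V E v) = 2 * card V - 2"
    proof (cases "n = 0")
      case True
      then obtain a where "V = {a}" using cV card_1_singletonE by auto
      then show ?thesis using sg by (simp add: degree_def)
    next
      case False
      then obtain l p where l: "l \<in> V" "{w\<in>V. E l w} = {p}" using leaf_exists[OF T] cV by auto
      let ?V = "V - {l}" and ?E = "\<lambda>a b. E a b \<and> a \<noteq> l \<and> b \<noteq> l"
      have T': "tree ?V ?E" using tree_remove[OF T l] False cV by auto
      have c': "card ?V = n" using cV l sg by simp
      have IH: "(\<Sum>v\<in>?V. degree ?V ?E v) = 2 * n - 2" using Suc.IH T' c' by blast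
      have pV: "p \<in> ?V" using l sg by auto
      have "E l p" using l by auto
      have dl: "degree V E l = 1" using l by (simp add: degree_def)
      have dv: "degree V E v = degree ?V ?E v + (if v = p then 1 else 0)" if v: "v \<in> ?V" for v
      proof -
        have s: "{w\<in>V. E v w} = {w\<in>?V. ?E v w} \<union> (if v = p then {l} else {})"
          using v l sg \<open>E l p\<close> by auto
        have "finite {w\<in>?V. ?E v w}" using sg by auto
        then show ?thesis unfolding degree_def s by (auto simp: card_insert_if)
      qed
      have "(\<Sum>v\<in>V. degree V E v) = degree V E l + (\<Sum>v\<in>?V. degree V E v)"
        using l sg by (simp add: sum.remove)
      also have "(\<Sum>v\<in>?V. degree V E v) = (\<Sum>v\<in>?V. degree ?V ?E v) + (\<Sum>v\<in>?V. (if v = p then 1 else 0))"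
        using dv by (simp add: sum.distrib)
      also have "(\<Sum>v\<in>?V. (if v = p then 1 else 0::nat)) = 1" using pV sg by simp
      finally show ?thesis using dl IH cV False by simp
    qed
  qed
qed

lemma deg_sum: "tree V E \<Longrightarrow> (\<Sum>v\<in>V. degree V E v) = 2 * card V - 2"
  using deg_sum_aux by blast



lemma walk_edge: "walk V E P \<Longrightarrow> Suc i < length P \<Longrightarrow> E (P ! i) (P ! Suc i)"
  unfolding walk_def by blast

lemma walk_in: "walk V E P \<Longrightarrow> i < length P \<Longrightarrow> P ! i \<in> V"
  unfolding walk_def by (auto simp: nth_mem subset_iff)

lemma hd0: "2 \<le> length P \<Longrightarrow> hd P = P ! 0" by (cases P) auto

locale legs =
  fixes V :: "'a set" and E m
  assumes fin: "finite V" and inV: "\<And>u v. E u v \<Longrightarrow> u \<in> V \<and> v \<in> V"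
    and sym: "\<And>u v. E u v \<Longrightarrow> E v u" and irr: "\<And>v. \<not> E v v"
    and D: "\<And>v. v \<in> V \<Longrightarrow> v \<noteq> m \<Longrightarrow> degree V E v \<le> 2"
    and mnp: "\<not> pendant V E m"
begin

definition N where "N v = {w\<in>V. E v w}"

definition leg where "leg P \<longleftrightarrow> gpath V E P \<and> pendant V E (hd P) \<and> last P = m"

lemma finN: "finite (N v)" unfolding N_def using fin by auto

lemma deg_N: "degree V E v = card (N v)" unfolding N_def degree_def by simp

lemma interior_sub: assumes "gpath V E P" "0 < j" "Suc j < length P"
  shows "{P ! (j - 1), P ! Suc j} \<subseteq> N (P ! j)"
proof -
  have w: "walk V E P" using assms unfolding gpath_def by auto
  have "E (P ! (j-1)) (P ! Suc (j - 1))" using walk_edge[OF w, of "j-1"] assms by auto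
  then have "E (P ! j) (P ! (j-1))" using assms sym by auto
  moreover have "E (P ! j) (P ! Suc j)" using walk_edge[OF w] assms by auto
  ultimately show ?thesis unfolding N_def using inV by auto
qed

lemma interior_card: assumes "gpath V E P" "0 < j" "Suc j < length P"
  shows "card {P ! (j - 1), P ! Suc j} = 2"
proof -
  have "distinct P" using assms unfolding gpath_def by auto
  then have "P ! (j - 1) \<noteq> P ! Suc j" using assms by (simp add: nth_eq_iff_index_eq)
  then show ?thesis by simp
qed

lemma interior_deg: assumes "gpath V E P" "0 < j" "Suc j < length P"
  shows "degree V E (P ! j) \<ge> 2"
proof -
  have "card {P ! (j - 1), P ! Suc j} \<le> card (N (P ! j))"
    by (rule card_mono[OF finN interior_sub[OF assms]])
  then show ?thesis using interior_card[OF assms] by (simp add: deg_N)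
qed

lemma nbr_interior: assumes "gpath V E P" "0 < j" "Suc j < length P" "P ! j \<noteq> m"
  shows "N (P ! j) = {P ! (j - 1), P ! Suc j}"
proof -
  have "P ! j \<in> V" using walk_in[of V E P j] assms unfolding gpath_def by auto
  then have "card (N (P ! j)) \<le> 2" using D assms deg_N by metis
  then have "{P ! (j - 1), P ! Suc j} = N (P ! j)"
    using card_seteq[OF finN interior_sub[OF assms(1-3)]] interior_card[OF assms(1-3)] by simp
  then show ?thesis by simp
qed

lemma leg_len: assumes "leg P" shows "length P \<ge> 2"
proof (rule ccontr)
  assume "\<not> ?thesis"
  moreover have "P \<noteq> []" using assms unfolding leg_def gpath_def walk_def by auto
  ultimately obtain a where "P = [a]" by (cases P) (auto simp: Suc_le_eq)
  then show False using assms mnp unfolding leg_def by auto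
qed

lemma leg_last: assumes "leg P" shows "P ! (length P - 1) = m"
proof -
  have "P \<noteq> []" using leg_len[OF assms] by auto
  then show ?thesis using assms unfolding leg_def by (simp add: last_conv_nth)
qed

lemma leg_not_m: assumes "leg P" "i < length P - 1" shows "P ! i \<noteq> m"
proof
  assume "P ! i = m"
  moreover have "distinct P" using assms unfolding leg_def gpath_def by auto
  moreover have "length P - 1 < length P" "i < length P" using leg_len[OF assms(1)] assms(2) by auto
  ultimately have "i = length P - 1" using leg_last[OF assms(1)] nth_eq_iff_index_eq by metis
  then show False using assms(2) by simp
qed

lemma nbr_start: assumes "leg P" shows "N (P ! 0) = {P ! 1}"
proof -
  have w: "walk V E P" using assms unfolding leg_def gpath_def by auto
  have "E (P ! 0) (P ! Suc 0)" using walk_edge[OF w, of 0] leg_len[OF assms] by auto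
  then have "P ! 1 \<in> N (P ! 0)" unfolding N_def using inV by auto
  moreover have "card (N (P ! 0)) = 1" using assms leg_len[OF assms]
    unfolding leg_def pendant_def deg_N by (simp add: hd0)
  ultimately show ?thesis by (metis card_1_singletonE singletonD)
qed

lemma leg_nbr: assumes "leg P" "i < length P - 1" shows "N (P ! i) \<subseteq> set P"
proof (cases "i = 0")
  case True
  then show ?thesis using nbr_start[OF assms(1)] leg_len[OF assms(1)] by auto
next
  case False
  then show ?thesis using nbr_interior[of P i] assms leg_not_m[OF assms] unfolding leg_def
    by auto
qed

lemma leg_nbr_m: assumes "leg P" "w \<in> set P" "E w m" shows "w = P ! (length P - 2)"
proof -
  obtain i where i: "i < length P" "P ! i = w" using assms(2) by (metis in_set_conv_nth)
  have d: "distinct P" using assms unfolding leg_def gpath_def by auto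
  have L: "length P \<ge> 2" using leg_len[OF assms(1)] .
  have lm: "P ! (length P - 1) = m" using leg_last[OF assms(1)] .
  have "i \<noteq> length P - 1" using i lm assms irr by auto
  then have i1: "i < length P - 1" using i by auto
  have mN: "m \<in> N (P ! i)" using assms i inV unfolding N_def by auto
  show ?thesis
  proof (cases "i = 0")
    case True
    then have "m = P ! 1" using nbr_start[OF assms(1)] mN by auto
    then have "length P - 1 = 1" using lm d L by (simp add: nth_eq_iff_index_eq)
    then show ?thesis using i True by (simp add: numeral_2_eq_2)
  next
    case False
    then have "m = P ! (i - 1) \<or> m = P ! Suc i"
      using nbr_interior[of P i] assms(1) i1 leg_not_m[OF assms(1) i1] mN unfolding leg_def by auto
    moreover have "length P - 1 < length P" "i - 1 < length P" "Suc i < length P" using L i1 by auto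
    ultimately have "length P - 1 = i - 1 \<or> length P - 1 = Suc i" using lm d
      nth_eq_iff_index_eq by metis
    then have "length P - 1 = Suc i" using i1 by auto
    then have "i = length P - 2" by simp
    then show ?thesis using i by auto
  qed
qed

lemma leg_unique: assumes P: "leg P" and Q: "leg Q" and h: "hd P = hd Q" shows "P = Q"
proof -
  have wP: "walk V E P" and dP: "distinct P" and wQ: "walk V E Q" and dQ: "distinct Q"
    using P Q unfolding leg_def gpath_def by auto
  have LP: "length P \<ge> 2" and LQ: "length Q \<ge> 2" using leg_len P Q by auto
  have eq: "i < length P \<longrightarrow> i < length Q \<longrightarrow> P ! i = Q ! i" for i
  proof (induction i rule: less_induct)
    case (less i)
    show ?case
    proof (intro impI)
      assume iP: "i < length P" and iQ: "i < length Q"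
      show "P ! i = Q ! i"
      proof (cases i)
        case 0 then show ?thesis using h LP LQ by (simp add: hd0)
      next
        case (Suc k)
        have k: "P ! k = Q ! k" using less Suc iP iQ by auto
        have kP: "k < length P - 1" using Suc iP by auto
        have e: "E (Q ! k) (Q ! Suc k)" using walk_edge[OF wQ] Suc iQ by auto
        then have inN: "Q ! Suc k \<in> N (P ! k)" using k inV unfolding N_def by auto
        show ?thesis
        proof (cases "k = 0")
          case True
          then show ?thesis using inN nbr_start[OF P] Suc by auto
        next
          case False
          have "N (P ! k) = {P ! (k - 1), P ! Suc k}"
            using nbr_interior[of P k] P kP leg_not_m[OF P kP] False unfolding leg_def by auto
          moreover have "Q ! Suc k \<noteq> Q ! (k - 1)" using dQ Suc iQ by (simp add: nth_eq_iff_index_eq)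
          moreover have "P ! (k - 1) = Q ! (k - 1)" using less Suc iP iQ by auto
          ultimately show ?thesis using inN Suc by auto
        qed
      qed
    qed
  qed
  have "length P = length Q"
  proof (rule ccontr)
    assume "length P \<noteq> length Q"
    then consider "length P < length Q" | "length Q < length P" by linarith
    then show False
    proof cases
      case 1
      then have "Q ! (length P - 1) \<noteq> m" using leg_not_m[OF Q] LP by auto
      moreover have "P ! (length P - 1) = Q ! (length P - 1)" using eq 1 LP by auto
      ultimately show False using leg_last[OF P] by simp
    next
      case 2
      then have "P ! (length Q - 1) \<noteq> m" using leg_not_m[OF P] LQ by auto
      moreover have "P ! (length Q - 1) = Q ! (length Q - 1)" using eq 2 LQ by auto
      ultimately show False using leg_last[OF Q] by simp
    qed
  qed
  then show ?thesis using eq by (simp add: nth_equalityI)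
qed

lemma leg_disjoint: assumes Q: "leg Q" and R: "leg R" and h: "hd Q \<noteq> hd R"
  shows "i < length Q - 1 \<Longrightarrow> Q ! i \<notin> set R"
proof (induction i)
  have LR: "length R \<ge> 2" using leg_len R by auto
  have LQ: "length Q \<ge> 2" using leg_len Q by auto
  {
    case 0
    show ?case
    proof
      assume "Q ! 0 \<in> set R"
      then obtain j where j: "j < length R" "R ! j = Q ! 0" by (metis in_set_conv_nth)
      have "Q ! 0 \<noteq> m" using leg_not_m[OF Q] LQ by auto
      then have "j \<noteq> length R - 1" using leg_last[OF R] j by auto
      moreover have "j \<noteq> 0" using h j hd0[OF LR] hd0[OF LQ] by (cases j) auto
      ultimately have "degree V E (R ! j) \<ge> 2" using interior_deg[of R j] R j unfolding leg_def by auto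
      moreover have "degree V E (Q ! 0) = 1" using Q LQ unfolding leg_def pendant_def by (simp add: hd0)
      ultimately show False using j by simp
    qed
  next
    case (Suc k)
    show ?case
    proof
      assume "Q ! Suc k \<in> set R"
      then obtain j where j: "j < length R" "R ! j = Q ! Suc k" by (metis in_set_conv_nth)
      have "Q ! Suc k \<noteq> m" using leg_not_m[OF Q] Suc by auto
      then have j1: "j < length R - 1" using leg_last[OF R] j by (cases "j = length R - 1") auto
      have "degree V E (Q ! Suc k) \<ge> 2" using interior_deg[of Q "Suc k"] Q Suc unfolding leg_def by auto
      moreover have "degree V E (R ! 0) = 1" using R LR unfolding leg_def pendant_def by (simp add: hd0)
      ultimately have "j \<noteq> 0" using j by (cases j) auto
      have wQ: "walk V E Q" using Q unfolding leg_def gpath_def by auto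
      have "E (Q ! Suc k) (Q ! k)" using walk_edge[OF wQ, of k] Suc sym by auto
      then have "Q ! k \<in> N (R ! j)" using j inV unfolding N_def by auto
      then have "Q ! k \<in> set R" using leg_nbr[OF R j1] by auto
      then show False using Suc by auto
    qed
  }
qed

end



lemma deg_pos: assumes T: "tree V E" and c: "card V \<ge> 2" and v: "v \<in> V"
  shows "degree V E v \<ge> 1"
proof -
  have sg: "finite V" "\<forall>u v. E u v \<longrightarrow> u \<in> V \<and> v \<in> V"
    using T unfolding tree_def simple_graph_def by auto
  have con: "gconnected V E" using T unfolding tree_def by auto
  have "card (V - {v}) \<ge> 1" using c v sg(1) by simp
  then have "V - {v} \<noteq> {}" by (metis card.empty not_one_le_zero)
  then obtain w where w: "w \<in> V" "w \<noteq> v" by blast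
  obtain q where q: "walk V E q" "distinct q" "hd q = v" "last q = w"
    using connected_path[OF con v w(1)] by auto
  have "length q \<ge> 2"
  proof (rule ccontr)
    assume "\<not> 2 \<le> length q"
    then have "length q = 1" using q(1) unfolding walk_def by (cases q) (auto simp: Suc_le_eq)
    then show False using q w by (cases q) auto
  qed
  then have "E (q ! 0) (q ! Suc 0)" using walk_edge[OF q(1), of 0] by auto
  moreover have "q ! 0 = v" using q \<open>length q \<ge> 2\<close> hd0 by metis
  ultimately have "q ! Suc 0 \<in> {w\<in>V. E v w}" using sg by auto
  moreover have "finite {w\<in>V. E v w}" using sg by auto
  ultimately show ?thesis unfolding degree_def by (metis One_nat_def Suc_leI card_gt_0_iff empty_iff)
qed

lemma deg_struct:
  fixes V :: "'a set" and E :: "'a \<Rightarrow> 'a \<Rightarrow> bool" and u :: "nat \<Rightarrow> 'a" and m :: 'a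
  assumes T: "tree V E"
    and dist: "distinct [u 1, u 2, u 3]"
    and pend: "{v. pendant V E v} = {u 1, u 2, u 3}"
    and maj: "major V E m"
  shows "\<forall>v\<in>V. v \<noteq> m \<longrightarrow> degree V E v \<le> 2"
proof (intro ballI impI, rule ccontr)
  fix v assume v: "v \<in> V" "v \<noteq> m" "\<not> degree V E v \<le> 2"
  have fin: "finite V" using T unfolding tree_def simple_graph_def by auto
  have pu: "pendant V E (u k)" if "k \<in> {1,2,3}" for k using pend that by auto
  then have uV: "u k \<in> V" and du: "degree V E (u k) = 1" if "k \<in> {1,2,3}" for k
    using that unfolding pendant_def by auto
  have mV: "m \<in> V" and dm: "degree V E m \<ge> 3" using maj unfolding major_def by auto
  have mu: "m \<noteq> u k" if "k \<in> {1,2,3}" for k using dm du[OF that] by auto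
  have vu: "v \<noteq> u k" if "k \<in> {1,2,3}" for k using v du[OF that] by auto
  let ?A = "{u 1, u 2, u 3, m, v}"
  let ?S = "V - ?A"
  have AV: "?A \<subseteq> V" using uV mV v by auto
  have mu': "m \<noteq> u 1" "m \<noteq> u 2" "m \<noteq> u 3" using mu by auto
  have vu': "v \<noteq> u 1" "v \<noteq> u 2" "v \<noteq> u 3" using vu by auto
  have du': "degree V E (u 1) = 1" "degree V E (u 2) = 1" "degree V E (u 3) = 1" using du by auto
  have cA: "card ?A = 5" using dist mu' vu' v by auto
  have c2: "card V \<ge> 2"
  proof -
    have "card {u 1, u 2} \<le> card V" using uV fin by (intro card_mono) auto
    then show ?thesis using dist by auto
  qed
  have cS: "card ?S = card V - 5" using cA AV fin by (simp add: card_Diff_subset finite_subset)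
  have dS: "degree V E s \<ge> 2" if s: "s \<in> ?S" for s
  proof -
    have "\<not> pendant V E s" using s pend by auto
    then have "degree V E s \<noteq> 1" using s unfolding pendant_def by auto
    moreover have "degree V E s \<ge> 1" using deg_pos[OF T c2] s by auto
    ultimately show ?thesis by linarith
  qed
  have "(\<Sum>s\<in>?S. 2) \<le> (\<Sum>s\<in>?S. degree V E s)" using dS by (intro sum_mono) auto
  then have sS: "2 * card ?S \<le> (\<Sum>s\<in>?S. degree V E s)" by simp
  have sA: "(\<Sum>s\<in>?A. degree V E s) = 3 + degree V E m + degree V E v"
    using dist mu' vu' v du' by auto
  have "(\<Sum>s\<in>V. degree V E s) = (\<Sum>s\<in>?S. degree V E s) + (\<Sum>s\<in>?A. degree V E s)"
    using sum.subset_diff[OF AV fin] by simp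
  moreover have "(\<Sum>s\<in>V. degree V E s) = 2 * card V - 2" using deg_sum[OF T] .
  moreover have "card V \<ge> 5" using cA AV fin by (metis card_mono)
  ultimately show False using sS sA cS dm v(3) by linarith
qed

definition pos :: "'a list \<Rightarrow> 'a \<Rightarrow> nat" where
  "pos p v = (THE i. i < length p \<and> p ! i = v)"

lemma pos_nth: "distinct p \<Longrightarrow> i < length p \<Longrightarrow> pos p (p ! i) = i"
  unfolding pos_def by (rule the_equality) (auto simp: nth_eq_iff_index_eq)

definition g :: "nat \<Rightarrow> real" where
  "g j = (if j mod 6 = 0 \<or> j mod 6 = 5 then 1 else if j mod 6 = 2 \<or> j mod 6 = 3 then -1 else 0)"

lemma g_rec': "g k + g (Suc (Suc k)) = g (Suc k)"
proof -
  define r where "r = k mod 6"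
  have r6: "r < 6" unfolding r_def by simp
  have a: "Suc k mod 6 = Suc r mod 6" unfolding r_def by (simp add: mod_Suc_eq)
  have b: "Suc (Suc k) mod 6 = Suc (Suc r) mod 6" unfolding r_def by (metis mod_Suc_eq)
  have "r = 0 \<or> r = 1 \<or> r = 2 \<or> r = 3 \<or> r = 4 \<or> r = 5" using r6 by linarith
  then show ?thesis unfolding g_def a b r_def[symmetric] by (elim disjE) auto
qed

lemma g_rec: "0 < j \<Longrightarrow> g (j - 1) + g (Suc j) = g j"
  using g_rec'[of "j - 1"] by (cases j) auto

lemma g_zero: "j mod 3 = 1 \<Longrightarrow> g j = 0"
  by (auto simp: g_def; presburger)

lemma g_nz: "j mod 3 = 0 \<Longrightarrow> g j \<noteq> 0"
  by (auto simp: g_def; presburger)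

lemma g0: "g 0 = 1" by (simp add: g_def)



theorem mainTheorem5:
  fixes V :: "'a set" and E :: "'a \<Rightarrow> 'a \<Rightarrow> bool" and u :: "nat \<Rightarrow> 'a" and m :: 'a
  assumes "tree V E"
    and "distinct [u 1, u 2, u 3]"
    and "{v. pendant V E v} = {u 1, u 2, u 3}"
    and "major V E m"
    and "gdist V E (u 1) m mod 3 = 1"
    and "gdist V E (u 2) m mod 3 = 1"
  shows "\<exists>x. lap_eigenvector V E 1 x \<and>
           (\<forall>k\<in>{1,2,3}. \<forall>v\<in>path_verts V E (u k) m.
               gdist V E v (u k) mod 3 = 1 \<longrightarrow> x v = 0)"
proof -
  note T = assms(1) and dist = assms(2) and pend = assms(3) and maj = assms(4)
  have sg: "finite V" "\<And>a b. E a b \<Longrightarrow> a \<in> V \<and> b \<in> V" "\<And>a b. E a b \<Longrightarrow> E b a" "\<And>a. \<not> E a a"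
    using T unfolding tree_def simple_graph_def by auto
  have con: "gconnected V E" using T unfolding tree_def by auto
  have pu: "pendant V E (u k)" if "k \<in> {1,2,3}" for k using pend that by auto
  have pu1: "pendant V E (u 1)" and pu2: "pendant V E (u 2)" and pu3: "pendant V E (u 3)"
    using pu by auto
  have mV: "m \<in> V" and dm: "degree V E m \<ge> 3" using maj unfolding major_def by auto
  have mnp: "\<not> pendant V E m" using dm unfolding pendant_def by auto
  have D: "\<forall>v\<in>V. v \<noteq> m \<longrightarrow> degree V E v \<le> 2" using deg_struct[OF T dist pend maj] .
  interpret legs V E m
    using sg D mnp by unfold_locales auto
  have uV: "u k \<in> V" if "k \<in> {1,2,3}" for k using pu[OF that] unfolding pendant_def by auto
  obtain P1 where P1: "walk V E P1" "distinct P1" "hd P1 = u 1" "last P1 = m"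
      "length P1 = Suc (gdist V E (u 1) m)"
    using connected_path[OF con uV[of 1] mV] by auto
  obtain P2 where P2: "walk V E P2" "distinct P2" "hd P2 = u 2" "last P2 = m"
      "length P2 = Suc (gdist V E (u 2) m)"
    using connected_path[OF con uV[of 2] mV] by auto
  have lP1: "leg P1" using P1 pu1 unfolding leg_def gpath_def by auto
  have lP2: "leg P2" using P2 pu2 unfolding leg_def gpath_def by auto
  define L1 where "L1 = gdist V E (u 1) m"
  define L2 where "L2 = gdist V E (u 2) m"
  have L1m: "L1 mod 3 = 1" and L2m: "L2 mod 3 = 1" using assms(5,6) L1_def L2_def by auto
  have len1: "length P1 = Suc L1" and len2: "length P2 = Suc L2" using P1 P2 L1_def L2_def by auto
  have L1p: "L1 \<ge> 1" and L2p: "L2 \<ge> 1" using leg_len[OF lP1] leg_len[OF lP2] len1 len2 by auto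
  have u12: "u 1 \<noteq> u 2" and u13: "u 1 \<noteq> u 3" and u23: "u 2 \<noteq> u 3" using dist by auto
  define c1 where "c1 = g (L2 - 1)"
  define c2 where "c2 = - g (L1 - 1)"
  have gL1: "g L1 = 0" and gL2: "g L2 = 0" using g_zero L1m L2m by auto
  define x where "x v = (if v \<in> set P1 then c1 * g (pos P1 v)
      else if v \<in> set P2 then c2 * g (pos P2 v) else 0)" for v
  have mP1: "P1 ! L1 = m" using leg_last[OF lP1] len1 by simp
  have mP2: "P2 ! L2 = m" using leg_last[OF lP2] len2 by simp
  have xP1: "x (P1 ! i) = c1 * g i" if "i < length P1" for i
    using that P1(2) unfolding x_def by (simp add: pos_nth)
  have xm: "x m = 0" using xP1[of L1] mP1 len1 gL1 by simp
  have xP2: "x (P2 ! i) = c2 * g i" if i: "i < length P2" for i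
  proof (cases "P2 ! i \<in> set P1")
    case True
    then have "\<not> i < length P2 - 1" using leg_disjoint[OF lP2 lP1] P1 P2 u12 by auto
    then have "i = L2" using i len2 by auto
    then show ?thesis using mP2 xm gL2 by simp
  next
    case False
    then show ?thesis using i P2(2) unfolding x_def by (simp add: pos_nth)
  qed
  have xoff: "x v = 0" if "v \<notin> set P1" "v \<notin> set P2" for v using that unfolding x_def by simp
  have eig: "laplacian V E x v = 1 * x v" if v: "v \<in> V" for v
  proof -
    have lap: "laplacian V E x v = real (card (N v)) * x v - (\<Sum>w\<in>N v. x w)"
      unfolding laplacian_def degree_def N_def by simp
    consider (A) "v \<in> set P1" "v \<noteq> m" | (B) "v \<in> set P2" "v \<noteq> m" | (C) "v = m"
      | (O) "v \<notin> set P1" "v \<notin> set P2" by blast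
    then show ?thesis
    proof cases
      case A
      then obtain j where j: "j < length P1" "P1 ! j = v" by (metis in_set_conv_nth)
      have jL: "j < L1" using j A mP1 len1 by (cases "j = L1") auto
      show ?thesis
      proof (cases "j = 0")
        case True
        have "N v = {P1 ! 1}" using nbr_start[OF lP1] j True by simp
        moreover have "x (P1 ! 1) = 0" using xP1[of 1] g_zero[of 1] L1p len1 by simp
        moreover have "x v = c1" using xP1[of 0] j True g0 by simp
        ultimately show ?thesis using lap by simp
      next
        case False
        have Nv: "N v = {P1 ! (j-1), P1 ! Suc j}"
          using nbr_interior[of P1 j] lP1 False jL len1 A j unfolding leg_def by auto
        have ne: "P1 ! (j-1) \<noteq> P1 ! Suc j" using P1(2) jL len1 by (simp add: nth_eq_iff_index_eq)
        have "(\<Sum>w\<in>N v. x w) = x (P1 ! (j-1)) + x (P1 ! Suc j)" using Nv ne by simp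
        also have "\<dots> = c1 * (g (j - 1) + g (Suc j))" using xP1[of "j-1"] xP1[of "Suc j"] jL len1
          by (simp add: distrib_left)
        also have "\<dots> = c1 * g j" using g_rec[of j] False by simp
        finally have s: "(\<Sum>w\<in>N v. x w) = c1 * g j" .
        have "card (N v) = 2" using Nv ne by simp
        then show ?thesis using lap s xP1[of j] j by simp
      qed
    next
      case B
      then obtain j where j: "j < length P2" "P2 ! j = v" by (metis in_set_conv_nth)
      have jL: "j < L2" using j B mP2 len2 by (cases "j = L2") auto
      show ?thesis
      proof (cases "j = 0")
        case True
        have "N v = {P2 ! 1}" using nbr_start[OF lP2] j True by simp
        moreover have "x (P2 ! 1) = 0" using xP2[of 1] g_zero[of 1] L2p len2 by simp
        moreover have "x v = c2" using xP2[of 0] j True g0 by simp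
        ultimately show ?thesis using lap by simp
      next
        case False
        have Nv: "N v = {P2 ! (j-1), P2 ! Suc j}"
          using nbr_interior[of P2 j] lP2 False jL len2 B j unfolding leg_def by auto
        have ne: "P2 ! (j-1) \<noteq> P2 ! Suc j" using P2(2) jL len2 by (simp add: nth_eq_iff_index_eq)
        have "(\<Sum>w\<in>N v. x w) = x (P2 ! (j-1)) + x (P2 ! Suc j)" using Nv ne by simp
        also have "\<dots> = c2 * (g (j - 1) + g (Suc j))" using xP2[of "j-1"] xP2[of "Suc j"] jL len2
          by (simp add: distrib_left)
        also have "\<dots> = c2 * g j" using g_rec[of j] False by simp
        finally have s: "(\<Sum>w\<in>N v. x w) = c2 * g j" .
        have "card (N v) = 2" using Nv ne by simp
        then show ?thesis using lap s xP2[of j] j by simp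
      qed
    next
      case C
      let ?a1 = "P1 ! (L1 - 1)" and ?a2 = "P2 ! (L2 - 1)"
      have "E ?a1 (P1 ! Suc (L1 - 1))" using walk_edge[OF P1(1), of "L1 - 1"] len1 L1p by auto
      then have "E ?a1 m" using mP1 L1p by simp
      then have "E m ?a1" by (rule sg(3))
      then have a1N: "?a1 \<in> N m" unfolding N_def using sg(2) by auto
      have "E ?a2 (P2 ! Suc (L2 - 1))" using walk_edge[OF P2(1), of "L2 - 1"] len2 L2p by auto
      then have "E ?a2 m" using mP2 L2p by simp
      then have "E m ?a2" by (rule sg(3))
      then have a2N: "?a2 \<in> N m" unfolding N_def using sg(2) by auto
      have "?a2 \<notin> set P1" using leg_disjoint[OF lP2 lP1, of "L2 - 1"] P1 P2 u12 len2 L2p by auto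
      moreover have "?a1 \<in> set P1" using len1 by simp
      ultimately have ne: "?a1 \<noteq> ?a2" by auto
      have zero: "\<forall>w\<in>N m - {?a1, ?a2}. x w = 0"
      proof
        fix w assume w: "w \<in> N m - {?a1, ?a2}"
        then have "E m w" unfolding N_def by simp
        then have E: "E w m" by (rule sg(3))
        have "w \<notin> set P1"
        proof
          assume "w \<in> set P1"
          then have "w = P1 ! (length P1 - 2)" using leg_nbr_m[OF lP1] E by auto
          then show False using w len1 by auto
        qed
        moreover have "w \<notin> set P2"
        proof
          assume "w \<in> set P2"
          then have "w = P2 ! (length P2 - 2)" using leg_nbr_m[OF lP2] E by auto
          then show False using w len2 by auto
        qed
        ultimately show "x w = 0" using xoff by auto
      qed
      have "(\<Sum>w\<in>N m. x w) = (\<Sum>w\<in>{?a1, ?a2}. x w)"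
        by (rule sum.mono_neutral_right[OF finN]) (use a1N a2N zero in auto)
      also have "\<dots> = x ?a1 + x ?a2" using ne by simp
      also have "\<dots> = c1 * g (L1 - 1) + c2 * g (L2 - 1)" using xP1 xP2 len1 len2 by simp
      also have "\<dots> = 0" unfolding c1_def c2_def by simp
      finally show ?thesis using lap C xm by simp
    next
      case O
      have "\<forall>w\<in>N v. x w = 0"
      proof
        fix w assume w: "w \<in> N v"
        then have "E v w" unfolding N_def by simp
        then have E: "E w v" by (rule sg(3))
        have c1: "x w = 0" if wP: "w \<in> set P1" and wm: "w \<noteq> m"
        proof -
          obtain i where i: "i < length P1" "P1 ! i = w" using wP by (metis in_set_conv_nth)
          have "i \<noteq> L1"
          proof
            assume "i = L1"
            then have "w = m" using i(2) mP1 by simp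
            then show False using wm by simp
          qed
          then have il: "i < length P1 - 1" using i(1) len1 by simp
          have "N (P1 ! i) \<subseteq> set P1" by (rule leg_nbr[OF lP1 il])
          then have "N w \<subseteq> set P1" using i(2) by simp
          moreover have "v \<in> N w" using E v unfolding N_def by simp
          ultimately have "v \<in> set P1" by blast
          then show ?thesis using O by simp
        qed
        have c2: "x w = 0" if wP: "w \<in> set P2" and wm: "w \<noteq> m"
        proof -
          obtain i where i: "i < length P2" "P2 ! i = w" using wP by (metis in_set_conv_nth)
          have "i \<noteq> L2"
          proof
            assume "i = L2"
            then have "w = m" using i(2) mP2 by simp
            then show False using wm by simp
          qed
          then have il: "i < length P2 - 1" using i(1) len2 by simp
          have "N (P2 ! i) \<subseteq> set P2" by (rule leg_nbr[OF lP2 il])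
          then have "N w \<subseteq> set P2" using i(2) by simp
          moreover have "v \<in> N w" using E v unfolding N_def by simp
          ultimately have "v \<in> set P2" by blast
          then show ?thesis using O by simp
        qed
        show "x w = 0"
        proof (cases "w = m")
          case True then show ?thesis using xm by simp
        next
          case False
          show ?thesis
          proof (cases "w \<in> set P1")
            case True then show ?thesis using c1 False by simp
          next
            case nP1: False
            show ?thesis
            proof (cases "w \<in> set P2")
              case True then show ?thesis using c2 False by simp
            next
              case False then show ?thesis using xoff nP1 by simp
            qed
          qed
        qed
      qed
      then have "(\<Sum>w\<in>N v. x w) = 0" by (rule sum.neutral)
      moreover have "x v = 0" using xoff O by simp
      ultimately show ?thesis using lap by simp
    qed
  qed
  have nz: "x (u 1) \<noteq> 0"
  proof -
    have "(L2 - 1) mod 3 = 0" using L2m L2p by presburger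
    then have "c1 \<noteq> 0" unfolding c1_def using g_nz by auto
    moreover have "P1 \<noteq> []" using len1 by auto
    moreover have "x (u 1) = c1" using xP1[of 0] P1(3) hd0[of P1] leg_len[OF lP1] g0 len1 by simp
    ultimately show ?thesis by simp
  qed
  have zc: "\<forall>k\<in>{1,2,3}. \<forall>v\<in>path_verts V E (u k) m. gdist V E v (u k) mod 3 = 1 \<longrightarrow> x v = 0"
  proof (intro ballI impI)
    fix k v assume k: "k \<in> {1::nat,2,3}" and v: "v \<in> path_verts V E (u k) m"
      and dv: "gdist V E v (u k) mod 3 = 1"
    obtain Q where Q: "gpath V E Q" "hd Q = u k" "last Q = m" "v \<in> set Q"
      using v unfolding path_verts_def by auto
    have lQ: "leg Q" using Q pu[OF k] unfolding leg_def by auto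
    obtain i where i: "i < length Q" "Q ! i = v" using Q(4) by (metis in_set_conv_nth)
    have symE: "\<forall>a b. E a b \<longrightarrow> E b a" using sg(3) by blast
    consider "k = 1" | "k = 2" | "k = 3" using k by auto
    then show "x v = 0"
    proof cases
      case 1
      then have QP: "Q = P1" using leg_unique[OF lQ lP1] Q P1 by auto
      have "gdist V E v (u k) = i" using gdist_nth[OF symE P1(1), of i] P1 i QP 1 by simp
      then have "g i = 0" using dv g_zero by simp
      then show ?thesis using xP1[of i] i QP by simp
    next
      case 2
      then have QP: "Q = P2" using leg_unique[OF lQ lP2] Q P2 by auto
      have "gdist V E v (u k) = i" using gdist_nth[OF symE P2(1), of i] P2 i QP 2 by simp
      then have "g i = 0" using dv g_zero by simp
      then show ?thesis using xP2[of i] i QP by simp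
    next
      case 3
      show ?thesis
      proof (cases "i < length Q - 1")
        case True
        have "v \<notin> set P1" using leg_disjoint[OF lQ lP1 _ True] Q P1 u13 3 i by auto
        moreover have "v \<notin> set P2" using leg_disjoint[OF lQ lP2 _ True] Q P2 u23 3 i by auto
        ultimately show ?thesis using xoff by auto
      next
        case False
        then have "i = length Q - 1" using i by auto
        then have "v = m" using leg_last[OF lQ] i by simp
        then show ?thesis using xm by simp
      qed
    qed
  qed
  have "lap_eigenvector V E 1 x"
    unfolding lap_eigenvector_def using eig nz uV[of 1] by auto
  then show ?thesis using zc by blast
qed

end
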